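(* Let $A \subset \mathbb{Z}$ be a finite set with $\min A = 0$, $\max A = b$, and $\gcd A = 1$. Let $\mathcal{C}_A = \{\sum_{a \in A} n_a (a,1) : n_a \in \mathbb{N}\} \subset \mathbb{Z}^2$, $\Lambda = \{(bn, m+n) : m,n \in \mathbb{Z}\}$, and $\Lambda^+ = \{(bn, m+n) : m,n \in \mathbb{N}\}$. For $a \in \{0,1,\ldots,b-1\}$ let $\mathcal{S}_a$ be the set of points of $\mathcal{C}_A$ congruent to $(a,1)$ modulo $\Lambda$. Then for each $a \in \{0,1,\ldots,b-1\}$ there exists a unique $(g_a,h_a) \in \mathbb{N}^2$ such that $\mathcal{S}_a \subseteq (g_a,h_a) + \Lambda^+$ and the set \[ E_a := \big((g_a,h_a) + \Lambda^+\big) \setminus \mathcal{S}_a \] is finite.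
   Context: $\mathbb{N} = \{0,1,2,\ldots\}$. The point $(g_a,h_a)$ is called the virtual generator of $\mathcal{S}_a$ and $E_a$ its extraneous set. *)

theory Defs
  imports Main
begin

definition cone_A :: "int set \<Rightarrow> (int \<times> int) set" where
  "cone_A A = {(\<Sum>a\<in>A. int (n a) * a, \<Sum>a\<in>A. int (n a)) | n :: int \<Rightarrow> nat. True}"

definition lattice_L :: "int \<Rightarrow> (int \<times> int) set" where
  "lattice_L b = {(b * n, m + n) | m n :: int. True}"

definition lattice_Lplus :: "int \<Rightarrow> (int \<times> int) set" where
  "lattice_Lplus b = {(b * int n, int m + int n) | m n :: nat. True}"

definition S_class :: "int set \<Rightarrow> int \<Rightarrow> int \<Rightarrow> (int \<times> int) set" where
  "S_class A b a = {p \<in> cone_A A. (fst p - a, snd p - 1) \<in> lattice_L b}"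

definition translate :: "int \<times> int \<Rightarrow> (int \<times> int) set \<Rightarrow> (int \<times> int) set" where
  "translate v X = (\<lambda>p. (fst v + fst p, snd v + snd p)) ` X"

end

theory Submission
  imports Defs
begin

lemma bezout_set:
  assumes "finite (A::int set)"
  shows "\<exists>c. (\<Sum>x\<in>A. c x * x) = Gcd A"
  using assms
proof (induction A rule: finite_induct)
  case empty
  then show ?case by simp
next
  case (insert z A)
  then obtain c where c: "(\<Sum>x\<in>A. c x * x) = Gcd A" by blast
  obtain u v where uv: "u * z + v * Gcd A = gcd z (Gcd A)" using bezout_int by blast
  define c' where "c' = (\<lambda>x. if x = z then u else v * c x)"
  have s: "(\<Sum>x\<in>A. c' x * x) = (\<Sum>x\<in>A. v * (c x * x))"
    by (rule sum.cong) (use insert in \<open>auto simp: c'_def\<close>)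
  have "(\<Sum>x\<in>insert z A. c' x * x) = u * z + (\<Sum>x\<in>A. v * (c x * x))"
    using insert s by (simp add: c'_def)
  also have "\<dots> = u * z + v * Gcd A" by (simp add: sum_distrib_left[symmetric] c)
  finally show ?case using uv by auto
qed

lemma latL: "(x, y) \<in> lattice_L b \<longleftrightarrow> b dvd x"
proof
  assume "(x, y) \<in> lattice_L b" then show "b dvd x" by (auto simp: lattice_L_def)
next
  assume "b dvd x"
  then obtain k where "x = b * k" by blast
  then show "(x, y) \<in> lattice_L b" unfolding lattice_L_def
    by (intro CollectI exI[of _ "y - k"] exI[of _ k]) auto
qed

lemma memT: "q \<in> translate (x, y) (lattice_Lplus b) \<longleftrightarrow>
   (\<exists>n m::nat. q = (x + b * int n, y + int m + int n))"
proof
  assume "q \<in> translate (x, y) (lattice_Lplus b)"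
  then obtain r where r: "r \<in> lattice_Lplus b" "q = (x + fst r, y + snd r)"
    unfolding translate_def by auto
  then obtain m n :: nat where "r = (b * int n, int m + int n)"
    unfolding lattice_Lplus_def by auto
  then have "q = (x + b * int n, y + (int m + int n))" using r by simp
  then show "\<exists>n m::nat. q = (x + b * int n, y + int m + int n)" by (auto simp: add.assoc)
next
  assume "\<exists>n m::nat. q = (x + b * int n, y + int m + int n)"
  then obtain n m :: nat where q: "q = (x + b * int n, y + int m + int n)" by blast
  have "(b * int n, int m + int n) \<in> lattice_Lplus b" unfolding lattice_Lplus_def by blast
  then show "q \<in> translate (x, y) (lattice_Lplus b)" unfolding translate_def q
    by (rule rev_image_eqI) (simp add: add.assoc)
qed

lemma cone_step:
  assumes "z \<in> A" "p \<in> cone_A A" "finite A"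
  shows "(fst p + z, snd p + 1) \<in> cone_A A"
proof -
  obtain n where p: "p = (\<Sum>a\<in>A. int (n a) * a, \<Sum>a\<in>A. int (n a))"
    using assms(2) unfolding cone_A_def by blast
  define n' where "n' = (\<lambda>x. n x + (if x = z then 1 else 0))"
  have pw: "\<And>a. int (n' a) * a = int (n a) * a + (if a = z then a else 0)"
    by (simp add: n'_def algebra_simps)
  have e1: "(\<Sum>a\<in>A. int (n' a) * a) = (\<Sum>a\<in>A. int (n a) * a) + (\<Sum>a\<in>A. (if a = z then a else 0))"
    by (simp only: pw sum.distrib)
  have pw2: "\<And>a. int (n' a) = int (n a) + (if a = z then 1 else 0)"
    by (simp add: n'_def)
  have e2: "(\<Sum>a\<in>A. int (n' a)) = (\<Sum>a\<in>A. int (n a)) + (\<Sum>a\<in>A. (if a = z then 1 else 0))"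
    by (simp only: pw2 sum.distrib)
  have "(fst p + z, snd p + 1) = (\<Sum>a\<in>A. int (n' a) * a, \<Sum>a\<in>A. int (n' a))"
    using e1 e2 assms(1,3) p by (simp add: sum.delta)
  then show ?thesis unfolding cone_A_def by blast
qed

lemma cone_iter:
  assumes "z \<in> A" "p \<in> cone_A A" "finite A"
  shows "(fst p + z * int k, snd p + int k) \<in> cone_A A"
proof (induction k)
  case 0
  then show ?case using assms by simp
next
  case (Suc k)
  from cone_step[OF assms(1) Suc assms(3)] show ?case by (simp add: algebra_simps)
qed

lemma cone_bounds:
  assumes "p \<in> cone_A A" "\<And>x. x \<in> A \<Longrightarrow> 0 \<le> x \<and> x \<le> b"
  shows "0 \<le> fst p \<and> fst p \<le> b * snd p"
proof -
  obtain n where p: "p = (\<Sum>a\<in>A. int (n a) * a, \<Sum>a\<in>A. int (n a))"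
    using assms(1) unfolding cone_A_def by blast
  have "0 \<le> (\<Sum>a\<in>A. int (n a) * a)" using assms(2) by (intro sum_nonneg) auto
  moreover have "(\<Sum>a\<in>A. int (n a) * a) \<le> (\<Sum>a\<in>A. int (n a) * b)"
    using assms(2) by (intro sum_mono mult_left_mono) auto
  moreover have "(\<Sum>a\<in>A. int (n a) * b) = b * (\<Sum>a\<in>A. int (n a))"
    by (simp add: sum_distrib_left mult.commute)
  ultimately show ?thesis using p by simp
qed

lemma uniq_aux:
  assumes b: "b > 0"
    and s1: "S \<subseteq> translate p (lattice_Lplus b)"
    and f: "finite (translate p (lattice_Lplus b) - S)"
    and s2: "S \<subseteq> translate q (lattice_Lplus b)"
  shows "\<exists>n m::nat. p = (fst q + b * int n, snd q + int m + int n)"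
proof -
  obtain x y where pxy: "p = (x, y)" by (cases p)
  define R1 where "R1 = (\<lambda>m::nat. (x, y + int m)) ` UNIV"
  define R2 where "R2 = (\<lambda>n::nat. (x + b * int n, y + int n)) ` UNIV"
  have inf1: "infinite R1"
    using finite_imageD[of "\<lambda>m::nat. (x, y + int m)" UNIV] unfolding R1_def by (auto simp: inj_on_def)
  have inf2: "infinite R2"
    using finite_imageD[of "\<lambda>n::nat. (x + b * int n, y + int n)" UNIV] unfolding R2_def by (auto simp: inj_on_def)
  have "(x, y + int m) \<in> translate (x, y) (lattice_Lplus b)" for m
    unfolding memT by (rule exI[of _ 0], rule exI[of _ m]) simp
  then have R1T: "R1 \<subseteq> translate p (lattice_Lplus b)" unfolding R1_def pxy by auto
  have "(x + b * int n, y + int n) \<in> translate (x, y) (lattice_Lplus b)" for n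
    unfolding memT by (rule exI[of _ n], rule exI[of _ 0]) simp
  then have R2T: "R2 \<subseteq> translate p (lattice_Lplus b)" unfolding R2_def pxy by auto
  have "R1 \<inter> S \<noteq> {}"
  proof
    assume "R1 \<inter> S = {}"
    then have "R1 \<subseteq> translate p (lattice_Lplus b) - S" using R1T by blast
    then show False using f inf1 finite_subset by blast
  qed
  then obtain m1 where m1: "(x, y + int m1) \<in> S" unfolding R1_def by blast
  have "R2 \<inter> S \<noteq> {}"
  proof
    assume "R2 \<inter> S = {}"
    then have "R2 \<subseteq> translate p (lattice_Lplus b) - S" using R2T by blast
    then show False using f inf2 finite_subset by blast
  qed
  then obtain n where n: "(x + b * int n, y + int n) \<in> S" unfolding R2_def by blast
  have "(x, y + int m1) \<in> translate (fst q, snd q) (lattice_Lplus b)" using m1 s2 by auto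
  then obtain n1 m1' :: nat where e1: "x = fst q + b * int n1" "y + int m1 = snd q + int m1' + int n1"
    unfolding memT by auto
  have "(x + b * int n, y + int n) \<in> translate (fst q, snd q) (lattice_Lplus b)" using n s2 by auto
  then obtain n2 m2 :: nat where e2: "x + b * int n = fst q + b * int n2" "y + int n = snd q + int m2 + int n2"
    unfolding memT by auto
  have "b * (int n1 + int n) = b * int n2" using e1 e2 by (simp add: algebra_simps)
  then have "int n2 = int n1 + int n" using b by simp
  then have "y = snd q + int m2 + int n1" using e2 by simp
  then show ?thesis using e1 pxy by auto
qed

lemma uniq:
  assumes b: "b > 0"
    and s1: "S \<subseteq> translate p (lattice_Lplus b)"
    and f1: "finite (translate p (lattice_Lplus b) - S)"
    and s2: "S \<subseteq> translate q (lattice_Lplus b)"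
    and f2: "finite (translate q (lattice_Lplus b) - S)"
  shows "p = q"
proof -
  obtain n m :: nat where 1: "p = (fst q + b * int n, snd q + int m + int n)"
    using uniq_aux[OF b s1 f1 s2] by blast
  obtain n' m' :: nat where 2: "q = (fst p + b * int n', snd p + int m' + int n')"
    using uniq_aux[OF b s2 f2 s1] by blast
  have "fst p = fst q + b * int n" using arg_cong[OF 1, of fst] by simp
  moreover have "fst q = fst p + b * int n'" using arg_cong[OF 2, of fst] by simp
  ultimately have "b * (int n + int n') = 0" by (simp add: algebra_simps)
  then have "n = 0" "n' = 0" using b by auto
  moreover have "snd p = snd q + int m + int n" using arg_cong[OF 1, of snd] by simp
  moreover have "snd q = snd p + int m' + int n'" using arg_cong[OF 2, of snd] by simp
  moreover have "fst p = fst q + b * int n" using arg_cong[OF 1, of fst] by simp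
  ultimately show ?thesis by (simp add: prod_eq_iff)
qed


lemma S_closed:
  assumes "p \<in> S_class A b a" "0 \<in> A" "b \<in> A" "finite A"
  shows "(fst p + b * int n, snd p + int m + int n) \<in> S_class A b a"
proof -
  have c: "p \<in> cone_A A" and d: "b dvd (fst p - a)"
    using assms(1) unfolding S_class_def by (auto simp: latL[of "fst p - a" "snd p - 1", symmetric])
  have "(fst p + 0 * int m, snd p + int m) \<in> cone_A A" by (rule cone_iter[OF assms(2) c assms(4)])
  then have "(fst p, snd p + int m) \<in> cone_A A" by simp
  from cone_iter[OF assms(3) this assms(4), of n]
  have c2: "(fst p + b * int n, snd p + int m + int n) \<in> cone_A A" by (simp add: mult.commute)
  have "b dvd (fst p + b * int n - a)" using d
    by (metis add.commute add_diff_eq dvd_add dvd_triv_left)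
  then show ?thesis using c2 unfolding S_class_def by (simp add: latL)
qed

lemma S_mem:
  "p \<in> S_class A b a \<longleftrightarrow> p \<in> cone_A A \<and> b dvd (fst p - a)"
  unfolding S_class_def using latL[of "fst p - a" "snd p - 1" b] by auto

theorem proposition5p2:
  fixes A :: "int set" and b :: int
  assumes "finite A" and "A \<noteq> {}" and "Min A = 0" and "Max A = b" and "Gcd A = 1"
  shows "\<forall>a \<in> {0..<b}. \<exists>!gh :: nat \<times> nat.
           S_class A b a \<subseteq> translate (int (fst gh), int (snd gh)) (lattice_Lplus b)
         \<and> finite (translate (int (fst gh), int (snd gh)) (lattice_Lplus b) - S_class A b a)"
proof
  fix a assume "a \<in> {0..<b}"
  then have a0: "0 \<le> a" and ab: "a < b" by auto
  then have b0: "b > 0" by simp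
  have Ab: "\<And>x. x \<in> A \<Longrightarrow> 0 \<le> x \<and> x \<le> b"
    using assms Min_le Max_ge by metis
  have zA: "0 \<in> A" using assms Min_in by metis
  have bA: "b \<in> A" using assms Max_in by metis
  define S where "S = S_class A b a"
  obtain c where c: "(\<Sum>x\<in>A. c x * x) = 1" using bezout_set[OF assms(1)] assms(5) by auto
  define nn where "nn = (\<lambda>x. nat ((a * c x) mod b))"
  have nn': "\<And>x. int (nn x) = (a * c x) mod b" using b0 by (simp add: nn_def)
  define P0 where "P0 = (\<Sum>x\<in>A. int (nn x) * x, \<Sum>x\<in>A. int (nn x))"
  have P0c: "P0 \<in> cone_A A" unfolding P0_def cone_A_def by blast
  have "(\<Sum>x\<in>A. ((a * c x) mod b) * x) mod b = (\<Sum>x\<in>A. (((a * c x) mod b) * x) mod b) mod b"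
    by (simp add: mod_sum_eq)
  also have "\<dots> = (\<Sum>x\<in>A. (a * c x * x) mod b) mod b" by (simp add: mod_mult_left_eq)
  also have "\<dots> = (\<Sum>x\<in>A. a * (c x * x)) mod b" by (simp add: mod_sum_eq mult.assoc)
  also have "\<dots> = a mod b" by (simp add: sum_distrib_left[symmetric] c)
  finally have "b dvd (fst P0 - a)" unfolding P0_def nn' by (simp add: mod_eq_dvd_iff)
  then have P0S: "P0 \<in> S" using P0c by (simp add: S_def S_mem)
  define J where "J = (\<lambda>p::int\<times>int. (fst p - a) div b)"
  define V where "V = (\<lambda>p::int\<times>int. snd p - J p)"
  have fstJ: "fst p = a + b * J p" if "p \<in> S" for p
    using that unfolding S_def S_mem J_def by auto
  have Jnn: "J p \<ge> 0" if "p \<in> S" for p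
  proof (rule ccontr)
    assume "\<not> J p \<ge> 0"
    then have "J p \<le> -1" by simp
    then have "b * J p \<le> b * (-1)" using b0 by (intro mult_left_mono) auto
    moreover have "fst p \<ge> 0" using cone_bounds[OF _ Ab] that unfolding S_def S_mem by blast
    ultimately show False using fstJ[OF that] ab by simp
  qed
  have Vnn: "V p \<ge> 0" if "p \<in> S" for p
  proof (rule ccontr)
    assume "\<not> V p \<ge> 0"
    then have "snd p < J p" unfolding V_def by simp
    then have "b * snd p < b * J p" using b0 by simp
    moreover have "fst p \<le> b * snd p" using cone_bounds[OF _ Ab] that unfolding S_def S_mem by blast
    ultimately show False using fstJ[OF that] a0 by simp
  qed
  have pform: "p = (a + b * J p, J p + V p)" if "p \<in> S" for p
    using fstJ[OF that] unfolding V_def by (simp add: prod_eq_iff)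
  define u0 where "u0 = (LEAST u::nat. \<exists>p\<in>S. J p = int u)"
  define v0 where "v0 = (LEAST v::nat. \<exists>p\<in>S. V p = int v)"
  have exu: "\<exists>u::nat. \<exists>p\<in>S. J p = int u" using P0S Jnn by (intro exI[of _ "nat (J P0)"]) auto
  have exv: "\<exists>v::nat. \<exists>p\<in>S. V p = int v" using P0S Vnn by (intro exI[of _ "nat (V P0)"]) auto
  obtain p1 where p1: "p1 \<in> S" "J p1 = int u0"
    using LeastI_ex[OF exu] unfolding u0_def by blast
  obtain p2 where p2: "p2 \<in> S" "V p2 = int v0"
    using LeastI_ex[OF exv] unfolding v0_def by blast
  have Jge: "J p \<ge> int u0" if "p \<in> S" for p
  proof -
    have "u0 \<le> nat (J p)" unfolding u0_def using that Jnn[OF that] by (intro Least_le) auto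
    then show ?thesis using Jnn[OF that] by (simp add: le_nat_iff)
  qed
  have Vge: "V p \<ge> int v0" if "p \<in> S" for p
  proof -
    have "v0 \<le> nat (V p)" unfolding v0_def using that Vnn[OF that] by (intro Least_le) auto
    then show ?thesis using Vnn[OF that] by (simp add: le_nat_iff)
  qed
  define gh where "gh = (nat a + nat b * u0, u0 + v0)"
  have g: "int (fst gh) = a + b * int u0" and h: "int (snd gh) = int u0 + int v0"
    using a0 b0 by (auto simp: gh_def)
  define T where "T = translate (int (fst gh), int (snd gh)) (lattice_Lplus b)"
  have sub: "S \<subseteq> T"
  proof
    fix p assume pS: "p \<in> S"
    define n where "n = nat (J p - int u0)"
    define m where "m = nat (V p - int v0)"
    have "p = (int (fst gh) + b * int n, int (snd gh) + int m + int n)"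
      using pform[OF pS] Jge[OF pS] Vge[OF pS] unfolding g h n_def m_def
      by (simp add: algebra_simps)
    then show "p \<in> T" unfolding T_def memT by blast
  qed
  define N where "N = nat (J p2 - int u0)"
  define M where "M = nat (V p1 - int v0)"
  have "T - S \<subseteq> (\<lambda>(n, m). (int (fst gh) + b * int n, int (snd gh) + int m + int n)) ` ({..<N} \<times> {..<M})"
  proof
    fix q assume qT: "q \<in> T - S"
    then have "q \<in> T" by blast
    then obtain n m :: nat where q: "q = (int (fst gh) + b * int n, int (snd gh) + int m + int n)"
      unfolding T_def memT by blast
    have "m < M"
    proof (rule ccontr)
      assume "\<not> m < M"
      then have mM: "int m \<ge> V p1 - int v0" unfolding M_def by simp
      have "(fst p1 + b * int n, snd p1 + int (nat (int m + int v0 - V p1)) + int n) \<in> S"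
        using S_closed[OF p1(1)[unfolded S_def] zA bA assms(1)] unfolding S_def .
      moreover have "(fst p1 + b * int n, snd p1 + int (nat (int m + int v0 - V p1)) + int n) = q"
        using pform[OF p1(1)] p1(2) mM unfolding q g h by (simp add: prod_eq_iff algebra_simps)
      ultimately show False using qT by simp
    qed
    moreover have "n < N"
    proof (rule ccontr)
      assume "\<not> n < N"
      then have nN: "int n \<ge> J p2 - int u0" unfolding N_def by simp
      have "(fst p2 + b * int (nat (int n + int u0 - J p2)), snd p2 + int m + int (nat (int n + int u0 - J p2))) \<in> S"
        using S_closed[OF p2(1)[unfolded S_def] zA bA assms(1)] unfolding S_def .
      moreover have "(fst p2 + b * int (nat (int n + int u0 - J p2)), snd p2 + int m + int (nat (int n + int u0 - J p2))) = q"
        using pform[OF p2(1)] p2(2) nN unfolding q g h by (simp add: prod_eq_iff algebra_simps)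
      ultimately show False using qT by simp
    qed
    ultimately show "q \<in> (\<lambda>(n, m). (int (fst gh) + b * int n, int (snd gh) + int m + int n)) ` ({..<N} \<times> {..<M})"
      unfolding q by auto
  qed
  then have fin: "finite (T - S)" by (rule finite_subset) auto
  show "\<exists>!gh :: nat \<times> nat.
           S_class A b a \<subseteq> translate (int (fst gh), int (snd gh)) (lattice_Lplus b)
         \<and> finite (translate (int (fst gh), int (snd gh)) (lattice_Lplus b) - S_class A b a)"
  proof (rule ex1I[of _ gh])
    show "S_class A b a \<subseteq> translate (int (fst gh), int (snd gh)) (lattice_Lplus b)
         \<and> finite (translate (int (fst gh), int (snd gh)) (lattice_Lplus b) - S_class A b a)"
      using sub fin unfolding S_def T_def by blast
  next
    fix gh' :: "nat \<times> nat"
    assume "S_class A b a \<subseteq> translate (int (fst gh'), int (snd gh')) (lattice_Lplus b)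
         \<and> finite (translate (int (fst gh'), int (snd gh')) (lattice_Lplus b) - S_class A b a)"
    then have "(int (fst gh'), int (snd gh')) = (int (fst gh), int (snd gh))"
      using uniq[OF b0, of "S_class A b a"] sub fin unfolding S_def T_def by blast
    then show "gh' = gh" by (simp add: prod_eq_iff)
  qed
qed

end
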